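(* For integers $0\le\ell\le 2n$ and $m\ge0$, let $p_{\ell,m,2n}$ be the weighted number of paths from $(\ell,m)$ to $(2n,0)$. Then \[ \frac{p_{\ell,j,2n}}{j+1}\ge\frac{p_{\ell,k,2n}}{k+1} \] for all integers $0\le j<k\le\ell\le 2n$ with $k-j$ even.
   Context: Paths here use up steps $U=(1,1)$ and down steps $D=(1,-1)$ and never go below $y=0$. An up step starting at $(a,b)$ has weight $(a-b+2)/(a+b+2)$; the weight of a path is the product of the weights of its up steps, and $p_{\ell,m,2n}$ is the sum of the weights of all such paths from $(\ell,m)$ to $(2n,0)$. Equivalently, $p_{2n,m,2n}=\delta_{m,0}$, $p_{\ell,-1,2n}=0$, and $p_{\ell,m,2n}=p_{\ell+1,m-1,2n}+\frac{\ell-m+2}{\ell+m+2}p_{\ell+1,m+1,2n}$ for $\ell<2n$, $m\ge0$. *)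

theory Defs
  imports Complex_Main
begin

(* paux r l m = weighted number of paths from (l,m) to (l+r,0), using up-step
   weight (a-b+2)/(a+b+2) for an up step starting at (a,b). Paths never go below y=0. *)
fun paux :: "nat \<Rightarrow> int \<Rightarrow> int \<Rightarrow> real" where
  "paux 0 l m = (if m = 0 then 1 else 0)"
| "paux (Suc r) l m =
     (if m < 0 then 0
      else (if m = 0 then 0 else paux r (l+1) (m-1))
           + (of_int (l - m + 2) / of_int (l + m + 2)) * paux r (l+1) (m+1))"

definition p :: "int \<Rightarrow> int \<Rightarrow> int \<Rightarrow> real" where
  "p l m N = paux (nat (N - l)) l m"

end

theory Submission imports Defs begin

lemma alg:
  fixes m s X b c :: real
  assumes m: "0 \<le> m" and s: "m + 2 \<le> s" and X: "X \<ge> m * B" and b: "b = (m+2)*B"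
    and B: "B \<ge> 0" and c: "c \<le> (m+4)*B" and c0: "c \<ge> 0"
  shows "(X + (s-m)/(s+m) * b)/(m+1) \<ge> (b + (s-m-2)/(s+m+2) * c)/(m+3)"
proof -
  have sp: "s + m > 0" "s+m+2>0" using m s by auto
  have w2: "(s-m-2)/(s+m+2) \<ge> 0" using m s by auto
  have "(b + (s-m-2)/(s+m+2) * c)/(m+3) \<le> ((m+2)*B + (s-m-2)/(s+m+2) * ((m+4)*B))/(m+3)"
  proof -
    have "(s-m-2)/(s+m+2) * c \<le> (s-m-2)/(s+m+2) * ((m+4)*B)" by (rule mult_left_mono[OF c w2])
    then show ?thesis using b m by (intro divide_right_mono) auto
  qed
  also have "\<dots> \<le> (m*B + (s-m)/(s+m) * ((m+2)*B))/(m+1)"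
  proof -
    have E: "0 \<le> 2*m^2*s + 8*m*s + 8*s - 2*m^2 - 4*m"
    proof -
      have "2*m^2*s \<ge> 4*m^2" proof -
        have "m*m*2 \<le> m*m*s" using m s by (intro mult_left_mono) auto
        then show ?thesis by (simp add: power2_eq_square algebra_simps)
      qed
      moreover have "8*m*s \<ge> 4*m"
      proof -
        have "m*1 \<le> m*s" using m s by (intro mult_left_mono) auto
        then show ?thesis using m by simp
      qed
      ultimately show ?thesis using m s by (smt (verit) zero_le_power2)
    qed
    have "0 \<le> (2*m^2*s + 8*m*s + 8*s - 2*m^2 - 4*m) * B" using E B by simp
    then have key: "(2*B*(m*s+3*s-m-2)) * ((m+1)*(s+m)) \<le> (2*B*(m*s+s-m)) * ((m+3)*(s+m+2))"
      by (simp add: algebra_simps power2_eq_square)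
    have D: "(m+3)*(s+m+2) > 0" "(m+1)*(s+m) > 0" using sp m by auto
    have eqL: "((m+2)*B + (s-m-2)/(s+m+2) * ((m+4)*B))/(m+3) = (2*B*(m*s+3*s-m-2))/((m+3)*(s+m+2))"
      using sp m by (simp add: field_simps; simp add: algebra_simps)
    have eqR: "(m*B + (s-m)/(s+m) * ((m+2)*B))/(m+1) = (2*B*(m*s+s-m))/((m+1)*(s+m))"
      using sp m by (simp add: field_simps; simp add: algebra_simps)
    have fr: "\<And>x y D1 D2::real. 0<D1 \<Longrightarrow> 0<D2 \<Longrightarrow> x*D2 \<le> y*D1 \<Longrightarrow> x/D1 \<le> y/D2"
      by (simp add: divide_simps)
    show ?thesis unfolding eqL eqR by (rule fr[OF D key])
  qed
  also have "\<dots> \<le> (X + (s-m)/(s+m) * b)/(m+1)"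
    using X b m by (intro divide_right_mono) auto
  finally show ?thesis .
qed

lemma paux_nonneg: "m \<le> l + 2 \<Longrightarrow> 0 \<le> paux r l m"
proof (induction r arbitrary: l m)
  case 0 then show ?case by simp
next
  case (Suc r)
  show ?case
  proof (cases "m < 0")
    case True then show ?thesis by simp
  next
    case False
    have w: "0 \<le> of_int (l - m + 2) / (of_int (l + m + 2) :: real)"
      using Suc.prems False by (intro divide_nonneg_nonneg) auto
    have a: "0 \<le> paux r (l+1) (m-1)" using Suc.prems by (intro Suc.IH) auto
    have b: "0 \<le> paux r (l+1) (m+1)" using Suc.prems by (intro Suc.IH) auto
    have e: "paux (Suc r) l m = (if m = 0 then 0 else paux r (l+1) (m-1))
       + (of_int (l - m + 2) / of_int (l + m + 2)) * paux r (l+1) (m+1)" using False by simp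
    show ?thesis unfolding e using a b w by (intro add_nonneg_nonneg mult_nonneg_nonneg) auto
  qed
qed

lemma step2: "0 \<le> m \<Longrightarrow> m + 2 \<le> l \<Longrightarrow>
   paux r l (m+2) / of_int (m+3) \<le> paux r l m / of_int (m+1)"
proof (induction r arbitrary: l m)
  case 0 then show ?case by simp
next
  case (Suc r)
  define B where "B = paux r (l+1) (m+1) / of_int (m+2)"
  define X where "X = (if m = 0 then 0 else paux r (l+1) (m-1))"
  define c where "c = paux r (l+1) (m+3)"
  have Bn: "0 \<le> B" unfolding B_def using Suc.prems paux_nonneg[of "m+1" "l+1" r] by simp
  have c0: "0 \<le> c" unfolding c_def using Suc.prems paux_nonneg[of "m+3" "l+1" r] by simp
  have b: "paux r (l+1) (m+1) = (of_int m+2)*B" unfolding B_def using Suc.prems by simp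
  have X: "X \<ge> of_int m * B"
  proof (cases "m = 0")
    case True then show ?thesis unfolding X_def by simp
  next
    case False
    have "paux r (l+1) (m+1) / of_int (m+2) \<le> paux r (l+1) (m-1) / of_int (m-1+1)"
      using Suc.IH[of "m-1" "l+1"] Suc.prems False by (simp add: add.commute)
    then show ?thesis unfolding X_def B_def using False Suc.prems by (simp add: field_simps)
  qed
  have c: "c \<le> (of_int m+4)*B"
  proof -
    have "c / of_int (m+4) \<le> B" unfolding c_def B_def
      using Suc.IH[of "m+1" "l+1"] Suc.prems by (simp add: add.assoc)
    then show ?thesis using Suc.prems by (simp add: field_simps)
  qed
  have A: "(X + (of_int l+2-of_int m)/(of_int l+2+of_int m) * paux r (l+1) (m+1))/(of_int m+1) \<ge>
     (paux r (l+1) (m+1) + (of_int l+2-of_int m-2)/(of_int l+2+of_int m+2) * c)/(of_int m+3)"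
    by (rule alg[OF _ _ X b Bn c c0]) (use Suc.prems in auto)
  have L: "paux (Suc r) l m = X + (of_int l+2-of_int m)/(of_int l+2+of_int m) * paux r (l+1) (m+1)"
    unfolding X_def using Suc.prems by (simp add: algebra_simps)
  have R: "paux (Suc r) l (m+2) = paux r (l+1) (m+1) + (of_int l+2-of_int m-2)/(of_int l+2+of_int m+2) * c"
    unfolding c_def using Suc.prems by (simp add: algebra_simps)
  show ?case using A unfolding L R by simp
qed

lemma chain: fixes d :: nat and j l :: int shows "0 \<le> j \<Longrightarrow> j + 2*d \<le> l \<Longrightarrow>
   paux r l (j+2*d) / of_int (j+2*d+1) \<le> paux r l j / of_int (j+1)"
proof (induction d)
  case 0 then show ?case by simp
next
  case (Suc d)
  have "paux r l (j+2*int d+2) / of_int (j+2*int d+2+1) \<le> paux r l (j+2*int d) / of_int (j+2*int d+1)"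
    using step2[of "j+2*int d" l r] Suc.prems by (simp add: add.assoc)
  also have "\<dots> \<le> paux r l j / of_int (j+1)" using Suc by simp
  finally show ?case by (simp add: algebra_simps)
qed

theorem lemma4p5:
  fixes n l j k :: int
  assumes "0 \<le> j" "j < k" "k \<le> l" "l \<le> 2*n" "even (k - j)"
  shows "p l j (2*n) / of_int (j+1) \<ge> p l k (2*n) / of_int (k+1)"
proof -
  obtain d where d: "k - j = 2*d" using assms(5) by (rule evenE)
  have "d \<ge> 0" using d assms by auto
  then obtain e :: nat where e: "d = int e" using nonneg_int_cases by blast
  have k: "k = j + 2 * int e" using d e by simp
  show ?thesis unfolding p_def k using chain[of j e l] assms k by simp
qed

end
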